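(* Let $E$ be a finite-dimensional real vector space and $M\subseteq E$ a convex polytope with non-empty interior. If $r>0$ and $\gamma\colon[0,r[\,\to M$ is a $C^1$-map, then there exists $\varepsilon>0$ such that $\gamma(0)+t\gamma'(0)\in M$ for all $t\in[0,\varepsilon]$.
   Context: A convex polytope is the convex hull of a finite set. A map $\gamma\colon[0,r[\,\to E$ is $C^1$ if it is continuous, $C^1$ on $]0,r[$, and $\gamma'$ extends continuously to $[0,r[$ (so $\gamma'(0)$ is this extension's value, equivalently the one-sided derivative at $0$). *)

theory Defs
  imports "HOL-Analysis.Analysis"
begin

end

theory Submission
  imports Defs
begin

lemma key1:
  fixes f g :: "real \<Rightarrow> real"
  assumes r: "r > 0"
    and cf: "continuous_on {0..<r} f"
    and df: "\<And>t. t \<in> {0<..<r} \<Longrightarrow> (f has_real_derivative g t) (at t)"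
    and cg: "continuous_on {0..<r} g"
    and g0: "g 0 > 0"
    and le: "\<And>t. t \<in> {0..<r} \<Longrightarrow> f t \<le> f 0"
  shows False
proof -
  have "continuous (at 0 within {0..<r}) g"
    using cg r by (simp add: continuous_on_eq_continuous_within)
  then obtain d where d: "d > 0" and dd: "\<And>t. t \<in> {0..<r} \<Longrightarrow> dist t 0 < d \<Longrightarrow> dist (g t) (g 0) < g 0"
    using g0 unfolding continuous_within_eps_delta by metis
  define t where "t = min (d/2) (r/2)"
  have t: "0 < t" "t < r" "t < d" using d r by (auto simp: t_def)
  have "continuous_on {0..t} f" by (rule continuous_on_subset[OF cf]) (use t in auto)
  moreover have "\<And>x. 0 < x \<Longrightarrow> x < t \<Longrightarrow> (f has_derivative ((*) (g x))) (at x)"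
    using df t by (simp add: has_field_derivative_def mult.commute)
  ultimately obtain z where z: "0 < z" "z < t" "f t - f 0 = (t - 0) * g z"
    using mvt[of 0 t f "\<lambda>x. (*) (g x)"] t by (metis mult.commute)
  have "dist (g z) (g 0) < g 0" using dd[of z] z t by auto
  hence "g z > 0" by (auto simp: dist_real_def)
  hence "f t - f 0 > 0" using z t by simp
  moreover have "f t \<le> f 0" using le t by auto
  ultimately show False by simp
qed

theorem lemma5p1:
  fixes M :: "'a::euclidean_space set"
    and \<gamma> \<gamma>' :: "real \<Rightarrow> 'a"
    and r :: real
  assumes "polytope M"
    and "interior M \<noteq> {}"
    and "r > 0"
    and "\<gamma> ` {0..<r} \<subseteq> M"
    and "continuous_on {0..<r} \<gamma>"
    and "\<And>t. t \<in> {0<..<r} \<Longrightarrow> (\<gamma> has_vector_derivative \<gamma>' t) (at t)"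
    and "continuous_on {0..<r} \<gamma>'"
  shows "\<exists>\<epsilon>>0. \<forall>t\<in>{0..\<epsilon>}. \<gamma> 0 + t *\<^sub>R \<gamma>' 0 \<in> M"
proof -
  obtain F where F: "finite F" "M = \<Inter>F" "\<forall>h\<in>F. \<exists>a b. a \<noteq> 0 \<and> h = {x. a \<bullet> x \<le> b}"
    using polytope_imp_polyhedron[OF assms(1)] unfolding polyhedron_def by blast
  have "\<exists>e>0. \<forall>t\<in>{0..e}. \<gamma> 0 + t *\<^sub>R \<gamma>' 0 \<in> h" if h: "h \<in> F" for h
  proof -
    obtain a b where h: "h = {x. a \<bullet> x \<le> b}" using F(3) h by blast
    have inh: "a \<bullet> \<gamma> t \<le> b" if "t \<in> {0..<r}" for t
    proof -
      have "\<gamma> t \<in> M" using assms(4) that by auto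
      thus ?thesis using F(2) \<open>h \<in> F\<close> h by auto
    qed
    have g0: "a \<bullet> \<gamma> 0 \<le> b" using inh assms(3) by auto
    show ?thesis
    proof (cases "a \<bullet> \<gamma>' 0 \<le> 0")
      case True
      show ?thesis
      proof (intro exI[of _ 1] conjI ballI)
        fix t :: real assume "t \<in> {0..1}"
        hence "t * (a \<bullet> \<gamma>' 0) \<le> 0" using True by (simp add: mult_nonneg_nonpos)
        thus "\<gamma> 0 + t *\<^sub>R \<gamma>' 0 \<in> h" using g0 h by (simp add: inner_add_right)
      qed simp
    next
      case False
      have lt: "a \<bullet> \<gamma> 0 < b"
      proof (rule ccontr)
        assume "\<not> ?thesis"
        hence eq: "a \<bullet> \<gamma> 0 = b" using g0 by simp
        show False
        proof (rule key1[of r "\<lambda>t. a \<bullet> \<gamma> t" "\<lambda>t. a \<bullet> \<gamma>' t"])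
          show "continuous_on {0..<r} (\<lambda>t. a \<bullet> \<gamma> t)"
            using assms(5) by (intro continuous_intros)
          show "continuous_on {0..<r} (\<lambda>t. a \<bullet> \<gamma>' t)"
            using assms(7) by (intro continuous_intros)
          fix t :: real
          assume "t \<in> {0<..<r}"
          then have "(\<gamma> has_vector_derivative \<gamma>' t) (at t)" using assms(6) by blast
          then have "(\<gamma> has_derivative (\<lambda>h. h *\<^sub>R \<gamma>' t)) (at t)"
            by (simp add: has_vector_derivative_def)
          then have "((\<lambda>t. a \<bullet> \<gamma> t) has_derivative (\<lambda>h. a \<bullet> (h *\<^sub>R \<gamma>' t))) (at t)"
            by (intro derivative_intros)
          then show "((\<lambda>t. a \<bullet> \<gamma> t) has_real_derivative a \<bullet> \<gamma>' t) (at t)"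
            unfolding has_field_derivative_def by (simp add: mult.commute[of _ "a \<bullet> \<gamma>' t"])
        qed (use assms(3) False eq inh in auto)
      qed
      define e where "e = (b - a \<bullet> \<gamma> 0) / (a \<bullet> \<gamma>' 0)"
      have c: "a \<bullet> \<gamma>' 0 > 0" using False by simp
      show ?thesis
      proof (intro exI[of _ e] conjI ballI)
        show "e > 0" using lt c by (simp add: e_def)
        fix t :: real assume "t \<in> {0..e}"
        hence "t * (a \<bullet> \<gamma>' 0) \<le> e * (a \<bullet> \<gamma>' 0)" using c by (intro mult_right_mono) auto
        also have "\<dots> = b - a \<bullet> \<gamma> 0" using c by (simp add: e_def)
        finally show "\<gamma> 0 + t *\<^sub>R \<gamma>' 0 \<in> h" using h by (simp add: inner_add_right)
      qed
    qed
  qed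
  then obtain e where e: "\<And>h. h \<in> F \<Longrightarrow> e h > 0 \<and> (\<forall>t\<in>{0..e h}. \<gamma> 0 + t *\<^sub>R \<gamma>' 0 \<in> h)"
    by metis
  define E where "E = Min (insert 1 (e ` F))"
  have "E > 0" using F(1) e by (auto simp: E_def)
  moreover have "\<gamma> 0 + t *\<^sub>R \<gamma>' 0 \<in> M" if "t \<in> {0..E}" for t
  proof -
    have "\<gamma> 0 + t *\<^sub>R \<gamma>' 0 \<in> h" if "h \<in> F" for h
    proof -
      have "E \<le> e h" using F(1) that by (auto simp: E_def)
      thus ?thesis using e[OF that] \<open>t \<in> {0..E}\<close> by auto
    qed
    thus ?thesis using F(2) by auto
  qed
  ultimately show ?thesis by blast
qed

end
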